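(* Let $n\in\mathbb{N}$ with $n\ge2$ and $S:=\{0,\dots,n-1\}$. If $C\subseteq\operatorname{codes}(S)$ is $n$-essential, then for every $m\in\{2,\dots,n-1\}$, with $S_m:=\{0,\dots,m-1\}$, the set \[ C':=\{x{\downarrow_{m-1}} : x\in C,\ \operatorname{center}(x)\le m-2\}\subseteq\operatorname{codes}(S_m) \] is $m$-essential.
   Context: A coronal code over $S$ of length $m$ is a formal string $x=c:p_0p_1\dots p_{m-1}$ with $c,p_i\in S$; $\operatorname{center}(x)=c$, $\operatorname{petals}(x)=\{p_0,\dots,p_{m-1}\}$; codes are identified up to rotation/reversal of the petal string, giving $\operatorname{codes}(S)$. For $a,b,c\in S$ (indeterminates), $c^a_b:=\arccos\!\Big(\frac{(c+a)^2+(c+b)^2-(a+b)^2}{2(c+a)(c+b)}\Big)$, and $\alpha(x):=\sum_{i=0}^{m-1} c^{p_i}_{p_{i+1\bmod m}}$. For $\rho\in(0,\infty)^S$, $\alpha(x)|_\rho$ is the value obtained by substituting $\rho(s)$ for each symbol $s$. For $S=\{0,\dots,n-1\}$, a nonempty $C\subseteq\operatorname{codes}(S)$ is fundamental if $\{\operatorname{center}(x):x\in C\}=\{0,\dots,n-2\}$ and for every nonempty $K\subseteq\{0,\dots,n-2\}$ there is $D\subseteq C$ with $\{\operatorname{center}(x):x\in D\}=K$ and $\big(\bigcup_{x\in D}\operatorname{petals}(x)\big)\setminus K\ne\emptyset$. $C$ is $n$-essential if it is fundamental and there exist nondecreasing maps $\rho,\sigma:S\to(0,\infty)$ with $\alpha(x)|_\rho\le2\pi\le\alpha(x)|_\sigma$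 for all $x\in C$. For a code $x$ over $\{0,\dots,n-1\}$ and $k$, $x{\downarrow_k}$ denotes the code obtained by replacing every symbol of $x$ strictly larger than $k$ by $k$. *)

theory Defs
  imports Complex_Main
begin

text \<open>A raw coronal string c:p_0...p_{m-1} is represented by the pair (c, [p_0,...,p_{m-1}]).
  A coronal code is the equivalence class of such a string under rotation/reversal
  of the petal string.\<close>

type_synonym raw_code = "nat \<times> nat list"
type_synonym code = "raw_code set"

definition code_cls :: "raw_code \<Rightarrow> code" where
  "code_cls x = {(fst x, q) | q. \<exists>k. q = rotate k (snd x) \<or> q = rotate k (rev (snd x))}"

definition codes :: "nat set \<Rightarrow> code set" where
  "codes S = code_cls ` {(c, ps). c \<in> S \<and> set ps \<subseteq> S}"

definition rep :: "code \<Rightarrow> raw_code" where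
  "rep X = (SOME x. x \<in> X)"

definition center :: "code \<Rightarrow> nat" where
  "center X = fst (rep X)"

definition petals :: "code \<Rightarrow> nat set" where
  "petals X = set (snd (rep X))"

definition ang :: "real \<Rightarrow> real \<Rightarrow> real \<Rightarrow> real" where
  "ang c a b = arccos (((c + a)^2 + (c + b)^2 - (a + b)^2) / (2 * (c + a) * (c + b)))"

definition alpha_raw :: "(nat \<Rightarrow> real) \<Rightarrow> raw_code \<Rightarrow> real" where
  "alpha_raw \<rho> x = (let c = fst x; ps = snd x; m = length ps in
     (\<Sum>i<m. ang (\<rho> c) (\<rho> (ps ! i)) (\<rho> (ps ! ((i + 1) mod m)))))"

definition alpha :: "(nat \<Rightarrow> real) \<Rightarrow> code \<Rightarrow> real" where
  "alpha \<rho> X = alpha_raw \<rho> (rep X)"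

definition down_raw :: "nat \<Rightarrow> raw_code \<Rightarrow> raw_code" where
  "down_raw k x = (min (fst x) k, map (\<lambda>p. min p k) (snd x))"

definition down :: "nat \<Rightarrow> code \<Rightarrow> code" where
  "down k X = code_cls (down_raw k (rep X))"

definition fundamental :: "nat \<Rightarrow> code set \<Rightarrow> bool" where
  "fundamental n C \<longleftrightarrow> C \<noteq> {} \<and> center ` C = {0..n-2} \<and>
     (\<forall>K. K \<noteq> {} \<and> K \<subseteq> {0..n-2} \<longrightarrow>
        (\<exists>D\<subseteq>C. center ` D = K \<and> (\<Union>x\<in>D. petals x) - K \<noteq> {}))"

definition essential :: "nat \<Rightarrow> code set \<Rightarrow> bool" where
  "essential n C \<longleftrightarrow> C \<subseteq> codes {0..<n} \<and> fundamental n C \<and>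
     (\<exists>\<rho> \<sigma> :: nat \<Rightarrow> real.
        (\<forall>s\<in>{0..<n}. \<rho> s > 0 \<and> \<sigma> s > 0) \<and>
        mono_on {0..<n} \<rho> \<and> mono_on {0..<n} \<sigma> \<and>
        (\<forall>x\<in>C. alpha \<rho> x \<le> 2 * pi \<and> 2 * pi \<le> alpha \<sigma> x))"

end

theory Submission imports Defs begin

definition cyc :: "(nat \<Rightarrow> nat \<Rightarrow> real) \<Rightarrow> nat list \<Rightarrow> real" where
  "cyc g ps = (\<Sum>i<length ps. g (ps!i) (ps!((i+1) mod length ps)))"

lemma sum_shift_mod:
  fixes h :: "nat \<Rightarrow> real"
  shows "(\<Sum>i<m. h ((k + i) mod m)) = (\<Sum>i<m. h i)"
proof (cases "m = 0")
  case True then show ?thesis by simp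
next
  case False
  have inj: "inj_on (\<lambda>i. (k + i) mod m) {..<m}"
  proof (rule inj_onI)
    fix i j assume i: "i \<in> {..<m}" and j: "j \<in> {..<m}" and e: "(k + i) mod m = (k + j) mod m"
    have "int i mod int m = int j mod int m"
    proof -
      have "(int k + int i) mod int m = (int k + int j) mod int m" using e
        by (metis of_nat_add of_nat_mod)
      then show ?thesis by (metis mod_add_cong mod_add_left_eq add_diff_cancel_left' mod_diff_cong)
    qed
    then show "i = j" using i j by simp
  qed
  have img: "(\<lambda>i. (k + i) mod m) ` {..<m} = {..<m}"
    using inj False by (intro endo_inj_surj) auto
  have "(\<Sum>i<m. h ((k + i) mod m)) = sum h ((\<lambda>i. (k + i) mod m) ` {..<m})"
    by (simp add: sum.reindex[OF inj])
  then show ?thesis using img by simp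
qed

lemma cyc_rotate: "cyc g (rotate k ps) = cyc g ps"
proof -
  let ?m = "length ps"
  let ?h = "\<lambda>j. g (ps!j) (ps!((j+1) mod ?m))"
  have "cyc g (rotate k ps) = (\<Sum>i<?m. ?h ((k + i) mod ?m))"
    unfolding cyc_def
  proof (rule sum.cong)
    fix i assume i: "i \<in> {..<length ps}"
    then have im: "i < ?m" by simp
    have lt: "Suc i mod ?m < ?m" using im by (intro mod_less_divisor) auto
    have "(k + (i + 1) mod ?m) mod ?m = ((k + i) mod ?m + 1) mod ?m"
      by (metis add.assoc mod_add_left_eq mod_add_right_eq)
    then show "g (rotate k ps ! i) (rotate k ps ! ((i + 1) mod length (rotate k ps))) = ?h ((k + i) mod ?m)"
      using im by (simp add: nth_rotate nth_rotate[OF lt])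
  qed simp
  also have "\<dots> = cyc g ps" unfolding cyc_def by (rule sum_shift_mod)
  finally show ?thesis .
qed

lemma cyc_rev:
  assumes sym: "\<And>a b. g a b = g b a"
  shows "cyc g (rev ps) = cyc g ps"
proof -
  let ?m = "length ps"
  let ?h = "\<lambda>j. g (ps!j) (ps!((j+1) mod ?m))"
  have "cyc g (rev ps) = (\<Sum>i<?m. g (rev ps ! i) (rev ps ! ((i+1) mod ?m)))"
    unfolding cyc_def by simp
  also have "\<dots> = (\<Sum>j<?m. g (rev ps ! (?m - Suc j)) (rev ps ! ((?m - Suc j + 1) mod ?m)))"
    by (rule sum.nat_diff_reindex[symmetric])
  also have "\<dots> = (\<Sum>j<?m. ?h ((?m - 1 + j) mod ?m))"
  proof (rule sum.cong)
    fix j assume "j \<in> {..<?m}"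
    then have j: "j < ?m" by simp
    show "g (rev ps ! (?m - Suc j)) (rev ps ! ((?m - Suc j + 1) mod ?m)) = ?h ((?m - 1 + j) mod ?m)"
    proof (cases j)
      case 0
      then show ?thesis using j by (simp add: rev_nth sym)
    next
      case (Suc j')
      have a: "(?m - 1 + j) mod ?m = j'" using j Suc
        by (metis Suc_diff_1 add.commute add_Suc_right bot_nat_0.not_eq_extremum less_nat_zero_code mod_add_self2 mod_less Suc_lessD)
      have b: "(?m - Suc j + 1) mod ?m = ?m - j" using j Suc by simp
      have c: "(j' + 1) mod ?m = j" using j Suc by simp
      show ?thesis using j Suc a b c by (simp add: rev_nth sym)
    qed
  qed simp
  also have "\<dots> = cyc g ps" unfolding cyc_def by (rule sum_shift_mod)
  finally show ?thesis .
qed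

lemma cyc_map_le:
  assumes "\<And>a b. a \<in> set ps \<Longrightarrow> b \<in> set ps \<Longrightarrow> g' (f a) (f b) \<le> g a b"
  shows "cyc g' (map f ps) \<le> cyc g ps"
proof -
  have "cyc g' (map f ps) = (\<Sum>i<length ps. g' (f (ps!i)) (f (ps!(Suc i mod length ps))))"
    unfolding cyc_def
  proof (rule sum.cong)
    fix i assume "i \<in> {..<length ps}"
    then have i: "i < length ps" by simp
    then have "(Suc i) mod length ps < length ps" by (intro mod_less_divisor) auto
    then show "g' (map f ps ! i) (map f ps ! ((i + 1) mod length (map f ps))) = g' (f (ps!i)) (f (ps!(Suc i mod length ps)))"
      using i by simp
  qed simp
  also have "\<dots> \<le> cyc g ps" unfolding cyc_def
  proof (simp, rule sum_mono)
    fix i assume "i \<in> {..<length ps}"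
    then have i: "i < length ps" by simp
    then have "(Suc i) mod length ps < length ps" by (intro mod_less_divisor) auto
    then show "g' (f (ps ! i)) (f (ps ! (Suc i mod length ps))) \<le> g (ps ! i) (ps ! (Suc i mod length ps))"
      using i by (intro assms) auto
  qed
  finally show ?thesis .
qed

lemma cyc_map_ge:
  assumes "\<And>a b. a \<in> set ps \<Longrightarrow> b \<in> set ps \<Longrightarrow> g a b \<le> g' (f a) (f b)"
  shows "cyc g ps \<le> cyc g' (map f ps)"
proof -
  have e: "cyc g' (map f ps) = (\<Sum>i<length ps. g' (f (ps!i)) (f (ps!(Suc i mod length ps))))"
    unfolding cyc_def
  proof (rule sum.cong)
    fix i assume "i \<in> {..<length ps}"
    then have i: "i < length ps" by simp
    then have "(Suc i) mod length ps < length ps" by (intro mod_less_divisor) auto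
    then show "g' (map f ps ! i) (map f ps ! ((i + 1) mod length (map f ps))) = g' (f (ps!i)) (f (ps!(Suc i mod length ps)))"
      using i by simp
  qed simp
  moreover have "cyc g ps \<le> (\<Sum>i<length ps. g' (f (ps!i)) (f (ps!(Suc i mod length ps))))" unfolding cyc_def
  proof (simp, rule sum_mono)
    fix i assume "i \<in> {..<length ps}"
    then have i: "i < length ps" by simp
    then have "(Suc i) mod length ps < length ps" by (intro mod_less_divisor) auto
    then show "g (ps ! i) (ps ! (Suc i mod length ps)) \<le> g' (f (ps ! i)) (f (ps ! (Suc i mod length ps)))"
      using i by (intro assms) auto
  qed
  ultimately show ?thesis by simp
qed

lemma ang_sym: "ang c a b = ang c b a"
  unfolding ang_def by (simp add: algebra_simps)

lemma ang_alt:
  assumes "c > 0" "a > 0" "b > 0"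
  shows "ang c a b = arccos (1 - 2 * (a / (c + a)) * (b / (c + b)))"
proof -
  have "((c + a)^2 + (c + b)^2 - (a + b)^2) / (2 * (c + a) * (c + b)) = 1 - 2 * (a / (c + a)) * (b / (c + b))"
  proof -
    have d1: "c + a \<noteq> 0" "c + b \<noteq> 0" using assms by auto
    define D where "D = (c + a) * (c + b)"
    have Dp: "D > 0" using assms unfolding D_def by simp
    have "(c + a)^2 + (c + b)^2 - (a + b)^2 = 2 * D - 4 * a * b"
      unfolding D_def by (simp add: power2_eq_square algebra_simps)
    then have "((c + a)^2 + (c + b)^2 - (a + b)^2) / (2 * (c + a) * (c + b)) = (2 * D - 4 * a * b) / (2 * D)"
      unfolding D_def by (simp add: mult.assoc)
    also have "\<dots> = 1 - 2 * a * b / D" using Dp by (simp add: diff_divide_distrib)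
    also have "\<dots> = 1 - 2 * (a / (c + a)) * (b / (c + b))" unfolding D_def by simp
    finally show ?thesis .
  qed
  then show ?thesis unfolding ang_def by simp
qed

lemma ang_mono1:
  assumes "c > 0" "a > 0" "b > 0" "a \<le> a'"
  shows "ang c a b \<le> ang c a' b"
proof -
  have a': "a' > 0" using assms by simp
  have q1: "a / (c + a) \<le> a' / (c + a')" using assms a'
    by (simp add: divide_simps) (simp add: algebra_simps mult_left_mono)
  have p1: "0 < a / (c + a)" "a / (c + a) < 1" using assms by (auto simp: divide_simps)
  have p1': "0 < a' / (c + a')" "a' / (c + a') < 1" using assms a' by (auto simp: divide_simps)
  have p2: "0 < b / (c + b)" "b / (c + b) < 1" using assms by (auto simp: divide_simps)
  have m: "(a / (c + a)) * (b / (c + b)) \<le> (a' / (c + a')) * (b / (c + b))"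
    using q1 p2 by (intro mult_right_mono) auto
  have lo: "0 \<le> (a / (c + a)) * (b / (c + b))"
    using mult_nonneg_nonneg[of "a/(c+a)" "b/(c+b)"] p1 p2 by linarith
  have hi: "(a' / (c + a')) * (b / (c + b)) \<le> 1" using p1' p2
    by (metis less_eq_real_def mult_le_one)
  show ?thesis unfolding ang_alt[OF assms(1-3)] ang_alt[OF assms(1) a' assms(3)]
    using m lo hi by (intro arccos_le_arccos) auto
qed

lemma ang_mono:
  assumes "c > 0" "a > 0" "b > 0" "a \<le> a'" "b \<le> b'"
  shows "ang c a b \<le> ang c a' b'"
proof -
  have "ang c a b \<le> ang c a' b" using assms by (intro ang_mono1) auto
  also have "\<dots> = ang c b a'" by (rule ang_sym)
  also have "\<dots> \<le> ang c b' a'" using assms by (intro ang_mono1) auto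
  also have "\<dots> = ang c a' b'" by (rule ang_sym)
  finally show ?thesis .
qed

lemma rep_cls: "rep (code_cls y) \<in> code_cls y"
  unfolding rep_def
proof (rule someI)
  show "y \<in> code_cls y" unfolding code_cls_def
    by (cases y) (auto intro: exI[of _ 0])
qed

lemma cls_elem:
  assumes "z \<in> code_cls y"
  shows "fst z = fst y \<and> (\<exists>k. snd z = rotate k (snd y) \<or> snd z = rotate k (rev (snd y)))"
  using assms unfolding code_cls_def by auto

lemma alpha_raw_cyc: "alpha_raw \<rho> z = cyc (\<lambda>a b. ang (\<rho> (fst z)) (\<rho> a) (\<rho> b)) (snd z)"
  unfolding alpha_raw_def cyc_def Let_def by simp

lemma alpha_cls: "alpha \<rho> (code_cls y) = alpha_raw \<rho> y"
proof -
  obtain k where e: "fst (rep (code_cls y)) = fst y"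
     "snd (rep (code_cls y)) = rotate k (snd y) \<or> snd (rep (code_cls y)) = rotate k (rev (snd y))"
    using cls_elem[OF rep_cls] by blast
  have s: "\<And>a b. ang (\<rho> (fst y)) (\<rho> a) (\<rho> b) = ang (\<rho> (fst y)) (\<rho> b) (\<rho> a)"
    by (rule ang_sym)
  show ?thesis unfolding alpha_def alpha_raw_cyc using e
    by (auto simp: cyc_rotate cyc_rev[OF s])
qed

lemma center_cls: "center (code_cls y) = fst y"
  unfolding center_def using cls_elem[OF rep_cls] by blast

lemma petals_cls: "petals (code_cls y) = set (snd y)"
  unfolding petals_def using cls_elem[OF rep_cls, of y] by auto

lemma codes_rep:
  assumes "X \<in> codes S"
  shows "fst (rep X) \<in> S" "set (snd (rep X)) \<subseteq> S"
proof -
  obtain y where y: "X = code_cls y" "fst y \<in> S" "set (snd y) \<subseteq> S"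
    using assms unfolding codes_def by auto
  have "rep X \<in> code_cls y" using y rep_cls by simp
  from cls_elem[OF this] y show "fst (rep X) \<in> S" "set (snd (rep X)) \<subseteq> S" by auto
qed

lemma center_down: "center (down k X) = min (center X) k"
  unfolding down_def center_cls by (simp add: down_raw_def center_def)

lemma petals_down: "petals (down k X) = (\<lambda>p. min p k) ` petals X"
  unfolding down_def petals_cls by (simp add: down_raw_def petals_def)

lemma alpha_down: "alpha \<rho> (down k X) =
   cyc (\<lambda>a b. ang (\<rho> (min (center X) k)) (\<rho> a) (\<rho> b)) (map (\<lambda>p. min p k) (snd (rep X)))"
  unfolding down_def alpha_cls alpha_raw_cyc down_raw_def center_def by simp

lemma alpha_cyc: "alpha \<rho> X = cyc (\<lambda>a b. ang (\<rho> (center X)) (\<rho> a) (\<rho> b)) (snd (rep X))"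
  unfolding alpha_def alpha_raw_cyc center_def by simp

lemma down_codes: "down k X \<in> codes {0..<Suc k}"
  unfolding down_def codes_def by (rule imageI) (auto simp: down_raw_def less_Suc_eq_le)

theorem lemma6p3:
  fixes n :: nat and C :: "code set"
  assumes "n \<ge> 2"
    and "C \<subseteq> codes {0..<n}"
    and "essential n C"
  shows "\<forall>m\<in>{2..n-1}.
           {down (m - 1) x | x. x \<in> C \<and> center x \<le> m - 2} \<subseteq> codes {0..<m} \<and>
           essential m {down (m - 1) x | x. x \<in> C \<and> center x \<le> m - 2}"
proof
  fix m assume m: "m \<in> {2..n-1}"
  define C' where "C' = {down (m - 1) x | x. x \<in> C \<and> center x \<le> m - 2}"
  have Csub: "C \<subseteq> codes {0..<n}" and fund: "fundamental n C"
    using assms(3) unfolding essential_def by auto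
  obtain \<rho> \<sigma> :: "nat \<Rightarrow> real" where pos: "\<forall>s\<in>{0..<n}. \<rho> s > 0 \<and> \<sigma> s > 0"
    and mr: "mono_on {0..<n} \<rho>" and ms: "mono_on {0..<n} \<sigma>"
    and al: "\<forall>x\<in>C. alpha \<rho> x \<le> 2 * pi \<and> 2 * pi \<le> alpha \<sigma> x"
    using assms(3) unfolding essential_def by blast
  have mm: "m - 1 + 1 = m" using m by auto
  have sub: "C' \<subseteq> codes {0..<m}"
  proof
    fix y assume "y \<in> C'"
    then obtain x where "y = down (m - 1) x" unfolding C'_def by auto
    then show "y \<in> codes {0..<m}" using down_codes[of "m - 1" x] mm by simp
  qed
  have cen: "center (down (m - 1) x) = center x" if "center x \<le> m - 2" for x
    using that m by (simp add: center_down)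
  define \<sigma>' where "\<sigma>' s = (if s < m - 1 then \<sigma> s else \<sigma> (n - 1))" for s
  have centers: "center ` C' = {0..m-2}"
  proof -
    have "center ` C' = center ` {x \<in> C. center x \<le> m - 2}"
      unfolding C'_def using cen by (auto simp: image_iff) (metis cen)
    also have "\<dots> = {0..m-2}"
    proof -
      have "center ` C = {0..n-2}" using fund unfolding fundamental_def by simp
      moreover have "center ` {x \<in> C. center x \<le> m - 2} = {c \<in> center ` C. c \<le> m - 2}" by auto
      moreover have "{c \<in> {0..n-2}. c \<le> m - 2} = {0..m-2}" using m by auto
      ultimately show ?thesis by simp
    qed
    finally show ?thesis .
  qed
  have "fundamental m C'"
    unfolding fundamental_def
  proof (intro conjI allI impI)
    show "C' \<noteq> {}"
    proof
      assume "C' = {}"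
      then have "center ` C' = {}" by simp
      then show False using centers by simp
    qed
    show "center ` C' = {0..m-2}" by (rule centers)
    fix K assume K: "K \<noteq> {} \<and> K \<subseteq> {0..m-2}"
    then have "K \<noteq> {} \<and> K \<subseteq> {0..n-2}" using m by auto
    moreover have "\<forall>K. K \<noteq> {} \<and> K \<subseteq> {0..n-2} \<longrightarrow>
        (\<exists>D\<subseteq>C. center ` D = K \<and> (\<Union>x\<in>D. petals x) - K \<noteq> {})"
      using fund unfolding fundamental_def by (elim conjE)
    ultimately obtain D where D: "D \<subseteq> C" "center ` D = K" "(\<Union>x\<in>D. petals x) - K \<noteq> {}"
      by meson
    have Dc: "\<And>x. x \<in> D \<Longrightarrow> center x \<le> m - 2" using D(2) K by auto
    show "\<exists>D'\<subseteq>C'. center ` D' = K \<and> (\<Union>x\<in>D'. petals x) - K \<noteq> {}"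
    proof (intro exI conjI)
      show "down (m - 1) ` D \<subseteq> C'" unfolding C'_def using D(1) Dc by auto
      show "center ` down (m - 1) ` D = K" using D(2) Dc cen by (auto simp: image_image)
      obtain x p where xp: "x \<in> D" "p \<in> petals x" "p \<notin> K" using D(3) by auto
      have "min p (m - 1) \<in> petals (down (m - 1) x)" using xp by (simp add: petals_down)
      moreover have "min p (m - 1) \<notin> K"
        using xp K m by (cases "p \<le> m - 1") (auto simp: min_def)
      ultimately show "(\<Union>x\<in>down (m - 1) ` D. petals x) - K \<noteq> {}" using xp by blast
    qed
  qed
  moreover have "\<exists>\<rho> \<sigma> :: nat \<Rightarrow> real.
        (\<forall>s\<in>{0..<m}. \<rho> s > 0 \<and> \<sigma> s > 0) \<and>
        mono_on {0..<m} \<rho> \<and> mono_on {0..<m} \<sigma> \<and>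
        (\<forall>x\<in>C'. alpha \<rho> x \<le> 2 * pi \<and> 2 * pi \<le> alpha \<sigma> x)"
  proof (intro exI conjI ballI)
    fix s assume s: "s \<in> {0..<m}"
    then show "\<rho> s > 0" using pos m by auto
    show "\<sigma>' s > 0" using pos m s unfolding \<sigma>'_def by auto
  next
    show "mono_on {0..<m} \<rho>"
    proof (rule mono_onI)
      fix r s assume rs: "r \<in> {0..<m}" "s \<in> {0..<m}" "r \<le> s"
      show "\<rho> r \<le> \<rho> s" using rs m by (auto intro!: mono_onD[OF mr])
    qed
  next
    show "mono_on {0..<m} \<sigma>'"
    proof (rule mono_onI)
      fix r s assume rs: "r \<in> {0..<m}" "s \<in> {0..<m}" "r \<le> s"
      show "\<sigma>' r \<le> \<sigma>' s" using rs m unfolding \<sigma>'_def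
        by (auto intro!: mono_onD[OF ms])
    qed
  next
    fix y assume "y \<in> C'"
    then obtain x where x: "y = down (m - 1) x" "x \<in> C" "center x \<le> m - 2" unfolding C'_def by auto
    have xc: "x \<in> codes {0..<n}" using x Csub by auto
    have cx: "center x \<in> {0..<n}" using codes_rep(1)[OF xc] unfolding center_def .
    have px: "set (snd (rep x)) \<subseteq> {0..<n}" using codes_rep(2)[OF xc] .
    have mc: "min (center x) (m - 1) = center x" using x(3) m by auto
    have "alpha \<rho> y = cyc (\<lambda>a b. ang (\<rho> (center x)) (\<rho> a) (\<rho> b)) (map (\<lambda>p. min p (m - 1)) (snd (rep x)))"
      using x(1) mc by (simp add: alpha_down)
    also have "\<dots> \<le> cyc (\<lambda>a b. ang (\<rho> (center x)) (\<rho> a) (\<rho> b)) (snd (rep x))"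
    proof (rule cyc_map_le)
      fix a b assume ab: "a \<in> set (snd (rep x))" "b \<in> set (snd (rep x))"
      then have abn: "a < n" "b < n" using px by auto
      show "ang (\<rho> (center x)) (\<rho> (min a (m - 1))) (\<rho> (min b (m - 1))) \<le> ang (\<rho> (center x)) (\<rho> a) (\<rho> b)"
        using abn cx pos m by (intro ang_mono mono_onD[OF mr]) auto
    qed
    also have "\<dots> = alpha \<rho> x" by (simp add: alpha_cyc)
    also have "\<dots> \<le> 2 * pi" using al x(2) by auto
    finally show "alpha \<rho> y \<le> 2 * pi" .
    have "2 * pi \<le> alpha \<sigma> x" using al x(2) by auto
    also have "alpha \<sigma> x = cyc (\<lambda>a b. ang (\<sigma>' (center x)) (\<sigma> a) (\<sigma> b)) (snd (rep x))"
    proof -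
      have "\<sigma>' (center x) = \<sigma> (center x)" using x(3) m unfolding \<sigma>'_def by auto
      then show ?thesis by (simp add: alpha_cyc)
    qed
    also have "\<dots> \<le> cyc (\<lambda>a b. ang (\<sigma>' (center x)) (\<sigma>' a) (\<sigma>' b)) (map (\<lambda>p. min p (m - 1)) (snd (rep x)))"
    proof (rule cyc_map_ge)
      fix a b assume ab: "a \<in> set (snd (rep x))" "b \<in> set (snd (rep x))"
      then have abn: "a < n" "b < n" using px by auto
      have le: "\<sigma> q \<le> \<sigma>' (min q (m - 1))" if "q < n" for q
      proof (cases "q < m - 1")
        case True then show ?thesis unfolding \<sigma>'_def by simp
      next
        case False
        then have "\<sigma>' (min q (m - 1)) = \<sigma> (n - 1)" unfolding \<sigma>'_def using m by (auto simp: min_def)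
        then show ?thesis using that by (auto intro!: mono_onD[OF ms])
      qed
      have cp: "\<sigma>' (center x) > 0" using x(3) m cx pos unfolding \<sigma>'_def by auto
      show "ang (\<sigma>' (center x)) (\<sigma> a) (\<sigma> b) \<le> ang (\<sigma>' (center x)) (\<sigma>' (min a (m - 1))) (\<sigma>' (min b (m - 1)))"
        using abn pos le cp by (intro ang_mono) auto
    qed
    also have "\<dots> = alpha \<sigma>' y" using x(1) mc by (simp add: alpha_down)
    finally show "2 * pi \<le> alpha \<sigma>' y" .
  qed
  ultimately show "C' \<subseteq> codes {0..<m} \<and> essential m C'"
    using sub unfolding essential_def by blast
qed

end
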